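(* Let $0<\gamma_\ell<\gamma_{\ell+1}<\infty$ and define $$b_\ell=\frac{\log(\log_2(1+\gamma_{\ell+1}))-\log(\log_2(1+\gamma_\ell))}{\log\gamma_{\ell+1}-\log\gamma_\ell},\qquad a_\ell=e^{\log(\log_2(1+\gamma_{\ell+1}))-b_\ell\log\gamma_{\ell+1}},$$ so that $\varphi_\ell(\gamma)=a_\ell\gamma^{b_\ell}$ is the unique function of this form with $\varphi_\ell(\gamma_\ell)=\log_2(1+\gamma_\ell)$ and $\varphi_\ell(\gamma_{\ell+1})=\log_2(1+\gamma_{\ell+1})$. Then $$\varphi_\ell(\gamma)\ge\log_2(1+\gamma)\ \text{for }\gamma\in[0,\gamma_\ell],\qquad \varphi_\ell(\gamma)\le\log_2(1+\gamma)\ \text{for }\gamma\in[\gamma_\ell,\gamma_{\ell+1}],\qquad \varphi_\ell(\gamma)>\log_2(1+\gamma)\ \text{for }\gamma\in(\gamma_{\ell+1},\infty).$$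
   Context: $\log$ denotes the natural logarithm. *)

theory Defs
  imports Complex_Main
begin

definition fit_b :: "real \<Rightarrow> real \<Rightarrow> real" where
  "fit_b g1 g2 = (ln (log 2 (1 + g2)) - ln (log 2 (1 + g1))) / (ln g2 - ln g1)"

definition fit_a :: "real \<Rightarrow> real \<Rightarrow> real" where
  "fit_a g1 g2 = exp (ln (log 2 (1 + g2)) - fit_b g1 g2 * ln g2)"

definition fit_phi :: "real \<Rightarrow> real \<Rightarrow> real \<Rightarrow> real" where
  "fit_phi g1 g2 g = fit_a g1 g2 * g powr fit_b g1 g2"

end

theory Submission
  imports Defs
begin

lemma concave_line:
  fixes k d :: "real \<Rightarrow> real"
  assumes D: "\<And>t. (k has_real_derivative d t) (at t)"
    and M: "\<And>s t. s < t \<Longrightarrow> d t < d s" and t12: "t1 < t2"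
  shows "(t < t1 \<longrightarrow> k t < k t2 + (k t2 - k t1)/(t2 - t1)*(t - t2))
       \<and> (t1 \<le> t \<and> t \<le> t2 \<longrightarrow> k t2 + (k t2 - k t1)/(t2 - t1)*(t - t2) \<le> k t)
       \<and> (t2 < t \<longrightarrow> k t < k t2 + (k t2 - k t1)/(t2 - t1)*(t - t2))"
proof -
  define b where "b = (k t2 - k t1)/(t2 - t1)"
  have mvt: "\<And>x y. x < y \<Longrightarrow> \<exists>z>x. z < y \<and> k y - k x = (y - x) * d z"
    using MVT2 D by blast
  obtain e where e: "t1 < e" "e < t2" "k t2 - k t1 = (t2 - t1) * d e"
    using mvt[OF t12] by blast
  have be: "b = d e" using e t12 unfolding b_def by (simp add: field_simps)
  have A: "k t < k t2 + b*(t - t2)" if lt: "t < t1"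
  proof -
    obtain z where z: "t < z" "z < t1" "k t1 - k t = (t1 - t) * d z" using mvt[OF lt] by blast
    have "d e < d z" using M z e by auto
    hence "(t1 - t) * d e < (t1 - t) * d z" using lt by simp
    thus ?thesis using z e be by (simp add: algebra_simps)
  qed
  have C: "k t < k t2 + b*(t - t2)" if lt: "t2 < t"
  proof -
    obtain z where z: "t2 < z" "z < t" "k t - k t2 = (t - t2) * d z" using mvt[OF lt] by blast
    have "d z < d e" using M z e by auto
    hence "(t - t2) * d z < (t - t2) * d e" using lt by simp
    thus ?thesis using z e be by (simp add: algebra_simps)
  qed
  have B: "k t2 + b*(t - t2) \<le> k t" if "t1 \<le> t" "t \<le> t2"
  proof (cases "t = t1 \<or> t = t2")
    case True
    thus ?thesis using t12 unfolding b_def by (auto simp: field_simps)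
  next
    case False
    hence lt: "t1 < t" "t < t2" using that by auto
    obtain z1 where z1: "t1 < z1" "z1 < t" "k t - k t1 = (t - t1) * d z1" using mvt[OF lt(1)] by blast
    obtain z2 where z2: "t < z2" "z2 < t2" "k t2 - k t = (t2 - t) * d z2" using mvt[OF lt(2)] by blast
    have dd: "d z2 < d z1" using M z1 z2 by auto
    have "b * (t2 - t1) = k t2 - k t1" using t12 unfolding b_def by simp
    also have "\<dots> = (t - t1) * d z1 + (t2 - t) * d z2"
      using z1(3) z2(3) by linarith
    also have "\<dots> \<ge> (t - t1) * d z2 + (t2 - t) * d z2"
      using dd lt by (simp add: mult_left_mono)
    finally have "b * (t2 - t1) \<ge> (t2 - t1) * d z2" by (simp add: algebra_simps)
    hence "b \<ge> d z2" using t12 by (simp add: mult.commute)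
    hence "(t2 - t) * d z2 \<le> (t2 - t) * b" using lt by (simp add: mult_left_mono)
    thus ?thesis using z2 by (simp add: algebra_simps)
  qed
  show ?thesis using A B C unfolding b_def by blast
qed

lemma F_mono:
  fixes x y :: real
  assumes "0 < x" "x < y"
  shows "(1+x)*ln(1+x)/x < (1+y)*ln(1+y)/y"
proof (rule DERIV_pos_imp_increasing[OF assms(2)])
  fix z :: real assume "x \<le> z" "z \<le> y"
  hence zp: "z > 0" using assms by auto
  have "((\<lambda>z. (1+z)*ln(1+z)/z) has_real_derivative (z - ln(1+z))/z^2) (at z)"
    using zp
    apply (auto intro!: derivative_eq_intros)
    by (simp add: field_simps power2_eq_square)
  moreover have "ln(1+z) < z" using zp by (rule ln_add_one_self_less_self)
  hence "0 < (z - ln(1+z))/z^2" using zp by simp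
  ultimately show "\<exists>D. ((\<lambda>z. (1+z)*ln(1+z)/z) has_real_derivative D) (at z) \<and> D > 0" by blast
qed

theorem proposition2:
  fixes g1 g2 :: real
  assumes "0 < g1" and "g1 < g2"
  shows "(\<forall>g. 0 \<le> g \<and> g \<le> g1 \<longrightarrow> fit_phi g1 g2 g \<ge> log 2 (1 + g))
       \<and> (\<forall>g. g1 \<le> g \<and> g \<le> g2 \<longrightarrow> fit_phi g1 g2 g \<le> log 2 (1 + g))
       \<and> (\<forall>g. g2 < g \<longrightarrow> fit_phi g1 g2 g > log 2 (1 + g))"
proof -
  define k where "k t = ln (ln (1 + exp t)) - ln (ln 2)" for t :: real
  define d where "d t = exp t / ((1 + exp t) * ln (1 + exp t))" for t :: real
  have lnp: "ln (1 + exp t) > 0" for t :: real by (rule ln_gt_zero) simp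
  have ep: "1 + exp t > 0" for t :: real by (simp add: add_pos_pos)
  have D: "(k has_real_derivative d t) (at t)" for t
  proof -
    have p: "ln (1 + exp t) > 0" by (rule ln_gt_zero) simp
    show ?thesis unfolding k_def d_def
      using p by (auto intro!: derivative_eq_intros simp: field_simps add_pos_pos)
  qed
  have M: "d t < d s" if "s < t" for s t
  proof -
    have "(1+exp s)*ln(1+exp s)/exp s < (1+exp t)*ln(1+exp t)/exp t"
      using F_mono[of "exp s" "exp t"] that by simp
    moreover have "(1+exp s)*ln(1+exp s)/exp s > 0" using lnp[of s] ep[of s] by simp
    ultimately have "inverse ((1+exp t)*ln(1+exp t)/exp t) < inverse ((1+exp s)*ln(1+exp s)/exp s)"
      using less_imp_inverse_less by blast
    thus ?thesis unfolding d_def by (simp add: field_simps)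
  qed
  have kg: "k (ln g) = ln (log 2 (1 + g))" if "g > 0" for g :: real
    using that unfolding k_def log_def by (simp add: ln_div)
  have lg: "log 2 (1 + g) = exp (k (ln g))" if "g > 0" for g :: real
    using that by (simp add: kg)
  define t1 where "t1 = ln g1"
  define t2 where "t2 = ln g2"
  have t12: "t1 < t2" using assms unfolding t1_def t2_def by simp
  define B where "B = (k t2 - k t1)/(t2 - t1)"
  have fb: "fit_b g1 g2 = B" unfolding fit_b_def B_def t1_def t2_def
    using assms by (simp add: kg)
  have fp: "fit_phi g1 g2 g = exp (k t2 + B * (ln g - t2))" if "g > 0" for g
  proof -
    have a: "fit_a g1 g2 = exp (k t2 - B * t2)"
      unfolding fit_a_def fb t2_def using assms by (simp add: kg)
    have "fit_phi g1 g2 g = exp (k t2 - B * t2) * exp (B * ln g)"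
      unfolding fit_phi_def a fb using that by (simp add: powr_def)
    also have "\<dots> = exp (k t2 - B * t2 + B * ln g)" by (simp only: exp_add)
    also have "k t2 - B * t2 + B * ln g = k t2 + B * (ln g - t2)" by (simp add: algebra_simps)
    finally show ?thesis .
  qed
  have key: "\<And>t. (t < t1 \<longrightarrow> k t < k t2 + B*(t - t2))
       \<and> (t1 \<le> t \<and> t \<le> t2 \<longrightarrow> k t2 + B*(t - t2) \<le> k t)
       \<and> (t2 < t \<longrightarrow> k t < k t2 + B*(t - t2))"
    using concave_line[OF D M t12] unfolding B_def by blast
  have P1: "fit_phi g1 g2 g \<ge> log 2 (1 + g)" if "0 \<le> g" "g \<le> g1" for g
  proof (cases "g = 0")
    case True thus ?thesis by (simp add: fit_phi_def)
  next
    case False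
    hence gp: "g > 0" using that by simp
    have "ln g \<le> t1" using gp that unfolding t1_def by simp
    have e1: "k t2 + B*(t1 - t2) = k t1"
    proof -
      have "B*(t1 - t2) = k t1 - k t2" using t12 unfolding B_def by (simp add: field_simps)
      thus ?thesis by simp
    qed
    have "k (ln g) \<le> k t2 + B*(ln g - t2)"
    proof (cases "ln g = t1")
      case True thus ?thesis using e1 by simp
    next
      case False thus ?thesis using key[of "ln g"] \<open>ln g \<le> t1\<close> by simp
    qed
    thus ?thesis using fp[OF gp] lg[OF gp] by simp
  qed
  have P2: "fit_phi g1 g2 g \<le> log 2 (1 + g)" if "g1 \<le> g" "g \<le> g2" for g
  proof -
    have gp: "g > 0" using that assms by simp
    have "t1 \<le> ln g" "ln g \<le> t2" using gp that assms unfolding t1_def t2_def by auto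
    hence "k t2 + B*(ln g - t2) \<le> k (ln g)" using key[of "ln g"] by blast
    thus ?thesis using fp[OF gp] lg[OF gp] by simp
  qed
  have P3: "fit_phi g1 g2 g > log 2 (1 + g)" if "g2 < g" for g
  proof -
    have gp: "g > 0" using that assms by simp
    have "t2 < ln g" using gp that assms unfolding t2_def by auto
    hence "k (ln g) < k t2 + B*(ln g - t2)" using key[of "ln g"] by blast
    thus ?thesis using fp[OF gp] lg[OF gp] by simp
  qed
  show ?thesis using P1 P2 P3 by blast
qed

end
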